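(* Let $k,\ell>0$ be real numbers and define $q_n=t_n-k$ and $r_n=t_n+\ell$ for all $n\ge0$. For complex $s$ with $\Re(s)>1$ put $\lambda(s;k,\ell)=2^s-\bigl(2^s(k-\ell)+(k+\ell)\bigr)$. Then for each $s$ with $\Re(s)>1$: (1) if $\lambda(s;k,\ell)=0$, then $\displaystyle\sum_{n\ge1}\frac{q_{n-1}}{n^s}=\frac{1-2^s}{1+2^s}\sum_{n\ge1}\frac{r_n}{n^s}$; (2) if $\lambda(s;k,\ell)=2^s$, then $\displaystyle(2^s+1)\sum_{n\ge1}\frac{q_{n-1}}{n^s}+(2^s-1)\sum_{n\ge1}\frac{r_n}{n^s}=2^s\zeta(s)$; (3) if $\lambda(s;k,\ell)=2^s-2$, then $\displaystyle(2^s+1)\sum_{n\ge1}\frac{q_{n-1}}{n^s}+(2^s-1)\sum_{n\ge1}\frac{r_n}{n^s}=2^s\eta(s)$.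
   Context: For $n\ge 0$, let $t_n\in\{0,1\}$ denote the sum of the binary digits of $n$ reduced modulo $2$ (so $t_0=0$; this is the Thue–Morse sequence). $\zeta(s)=\sum_{n\ge1}n^{-s}$ is the Riemann zeta function and $\eta(s)=\sum_{n\ge1}(-1)^{n-1}n^{-s}$ is the Dirichlet eta (alternating zeta) function, both for $\Re(s)>1$. *)

theory Defs
  imports "HOL-Analysis.Analysis"
begin

fun bin_digit_sum :: "nat \<Rightarrow> nat" where
  "bin_digit_sum n = (if n = 0 then 0 else n mod 2 + bin_digit_sum (n div 2))"

declare bin_digit_sum.simps[simp del]

definition thue_morse :: "nat \<Rightarrow> nat" where
  "thue_morse n = bin_digit_sum n mod 2"

text \<open>Riemann zeta and Dirichlet eta as Dirichlet series (meaningful for Re s > 1).\<close>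
definition zeta_series :: "complex \<Rightarrow> complex" where
  "zeta_series s = (\<Sum>n. 1 / (of_nat (Suc n) powr s))"

definition eta_series :: "complex \<Rightarrow> complex" where
  "eta_series s = (\<Sum>n. (-1) ^ n / (of_nat (Suc n) powr s))"

end

theory Submission
  imports Defs
begin

lemma bds_even: "bin_digit_sum (2*m) = bin_digit_sum m"
  by (cases "m = 0") (simp, subst bin_digit_sum.simps, simp)

lemma bds_odd: "bin_digit_sum (2*m+1) = Suc (bin_digit_sum m)"
  by (subst bin_digit_sum.simps) simp

lemma tm_even: "real (thue_morse (2*m)) = real (thue_morse m)"
  by (simp add: thue_morse_def bds_even)

lemma tm_le: "thue_morse n \<le> 1"
  by (simp add: thue_morse_def)

lemma tm_odd: "real (thue_morse (2*m+1)) = 1 - real (thue_morse m)"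
proof -
  have h: "bin_digit_sum (Suc (2*m)) = Suc (bin_digit_sum m)" using bds_odd[of m] by simp
  have "bin_digit_sum m mod 2 = 0 \<or> bin_digit_sum m mod 2 = 1" by presburger
  then show ?thesis unfolding thue_morse_def using h by (auto simp: mod_Suc)
qed

lemma tm_odd': "m > 0 \<Longrightarrow> real (thue_morse (2*m-1)) = 1 - real (thue_morse (m-1))"
proof -
  assume "m > 0"
  then obtain j where j: "m = Suc j" using gr0_implies_Suc by blast
  have "2*m-1 = 2*j+1" using j by simp
  then show ?thesis using tm_odd[of j] j by simp
qed

definition D :: "complex \<Rightarrow> nat \<Rightarrow> complex" where "D s N = of_nat N powr s"

lemma D_double: "D s (2*m) = 2 powr s * D s m"
  unfolding D_def by (simp add: powr_times_real)

lemma D_nz: "N > 0 \<Longrightarrow> D s N \<noteq> 0"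
  unfolding D_def by simp

lemma summable_z: assumes "Re s > 1" shows "summable (\<lambda>N. norm (1 / D s N))"
proof -
  have "summable (\<lambda>N. real N powr (- Re s))"
    using assms by (subst summable_real_powr_iff) simp
  moreover have "norm (1 / D s N) = real N powr (- Re s)" for N
    unfolding D_def by (simp add: norm_divide norm_powr_real_powr powr_minus_divide)
  ultimately show ?thesis by simp
qed


lemma bds0: "bin_digit_sum 0 = 0" by (subst bin_digit_sum.simps) simp
lemma tm0: "thue_morse 0 = 0" by (simp add: thue_morse_def bds0)
lemma tm1: "thue_morse 1 = 1" using bds_odd[of 0] by (simp add: thue_morse_def bds0)

lemma pow2_nz: "(2::complex) powr s \<noteq> 0" by simp

lemma pair_xy:
  fixes s :: complex
  defines "x \<equiv> \<lambda>N. complex_of_real (real (thue_morse (N - 1))) / D s N"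
      and "y \<equiv> \<lambda>N. complex_of_real (real (thue_morse N)) / D s N"
      and "z \<equiv> \<lambda>N. 1 / D s N"
  shows "x (2*m) + x (2*m+1) + y (2*m) + y (2*m+1) = z (2*m) + z (2*m+1) + (y m - x m) / 2 powr s"
proof (cases "m = 0")
  case True
  then show ?thesis by (simp add: x_def y_def z_def D_def tm0 tm1[simplified])
next
  case False
  have d: "D s m \<noteq> 0" using False D_nz by simp
  have d2: "D s (2*m+1) \<noteq> 0" using D_nz by simp
  have a: "complex_of_real (real (thue_morse (2*m - 1))) = 1 - of_real (thue_morse (m-1))"
    using tm_odd'[of m] False by simp
  have b: "complex_of_real (real (thue_morse (2*m + 1))) = 1 - of_real (thue_morse m)"
    using tm_odd[of m] by (metis of_real_1 of_real_diff of_real_of_nat_eq)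
  have c: "complex_of_real (real (thue_morse (2*m))) = of_real (thue_morse m)"
    using tm_even[of m] by simp
  have x0: "x (2*m) = (1 - of_real (thue_morse (m-1))) / (2 powr s * D s m)"
    using a by (simp add: x_def D_double)
  have x1: "x (2*m+1) = of_real (thue_morse m) / D s (2*m+1)"
    using c by (simp add: x_def)
  have y0: "y (2*m) = of_real (thue_morse m) / (2 powr s * D s m)"
    using c by (simp add: y_def D_double)
  have y1: "y (2*m+1) = (1 - of_real (thue_morse m)) / D s (2*m+1)"
    using b unfolding y_def by simp
  have z0: "z (2*m) = 1 / (2 powr s * D s m)" by (simp add: z_def D_double)
  show ?thesis unfolding x0 x1 y0 y1 z0 using d d2 pow2_nz[of s]
    by (simp add: field_simps x_def y_def z_def)
qed

lemma pair_e:
  fixes s :: complex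
  defines "e \<equiv> \<lambda>N. - ((-1) ^ N) / D s N"
      and "z \<equiv> \<lambda>N. 1 / D s N"
  shows "e (2*m) + e (2*m+1) = z (2*m) + z (2*m+1) - 2 * z m / 2 powr s"
  unfolding e_def z_def D_double using pow2_nz[of s]
  by (cases "D s m = 0") (auto simp: field_simps)

lemma grouped:
  assumes "f sums a" "(\<lambda>m. f (2*m) + f (2*m+1)) = g"
  shows "g sums a"
proof -
  have "(\<lambda>n. sum f {n * 2 ..< n * 2 + 2}) sums a" using sums_group[OF assms(1), of 2] by simp
  moreover have "sum f {n * 2 ..< n * 2 + 2} = f (2*n) + f (2*n+1)" for n
    by (simp add: numeral_2_eq_2 mult.commute)
  ultimately show ?thesis using assms(2) by simp
qed

lemma summ_bound:
  fixes f :: "nat \<Rightarrow> complex"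
  assumes "Re s > 1" "\<And>N. norm (f N) \<le> norm (1 / D s N)"
  shows "summable f"
  by (rule summable_comparison_test'[OF summable_z[OF assms(1)]]) (use assms(2) in auto)

lemma norm_pow2: "Re s > 1 \<Longrightarrow> norm ((2::complex) powr s) > 2"
proof -
  assume "Re s > 1"
  have "norm ((2::complex) powr s) = 2 powr Re s" by (simp add: norm_powr_real_powr)
  also have "\<dots> > 2 powr 1" using \<open>Re s > 1\<close> by (intro powr_less_mono) auto
  finally show ?thesis by simp
qed


lemma shift0: "f sums a \<Longrightarrow> f 0 = 0 \<Longrightarrow> (\<lambda>n. f (Suc n)) sums (a::complex)"
  by (subst sums_Suc_iff) simp

theorem theorem4:
  fixes k l :: real and s :: complex
  assumes "k > 0" and "l > 0" and "Re s > 1"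
  defines "q \<equiv> (\<lambda>n. real (thue_morse n) - k)"
      and "r \<equiv> (\<lambda>n. real (thue_morse n) + l)"
      and "lam \<equiv> 2 powr s - (2 powr s * complex_of_real (k - l) + complex_of_real (k + l))"
  defines "Q \<equiv> (\<Sum>n. complex_of_real (q n) / (of_nat (Suc n) powr s))"
      and "R \<equiv> (\<Sum>n. complex_of_real (r (Suc n)) / (of_nat (Suc n) powr s))"
  shows "(lam = 0 \<longrightarrow> Q = (1 - 2 powr s) / (1 + 2 powr s) * R)
       \<and> (lam = 2 powr s \<longrightarrow> (2 powr s + 1) * Q + (2 powr s - 1) * R = 2 powr s * zeta_series s)
       \<and> (lam = 2 powr s - 2 \<longrightarrow> (2 powr s + 1) * Q + (2 powr s - 1) * R = 2 powr s * eta_series s)"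
proof -
  define w where "w = (2::complex) powr s"
  define x where "x = (\<lambda>N. complex_of_real (real (thue_morse (N - 1))) / D s N)"
  define y where "y = (\<lambda>N. complex_of_real (real (thue_morse N)) / D s N)"
  define z where "z = (\<lambda>N. 1 / D s N)"
  define e where "e = (\<lambda>N. - ((-1) ^ N) / D s N)"
  have wnz: "w \<noteq> 0" unfolding w_def by simp
  have w1: "w + 1 \<noteq> 0"
  proof
    assume "w + 1 = 0" then have "w = -1" by (metis add_diff_cancel_right' diff_0)
    then show False using norm_pow2[OF assms(3)] unfolding w_def by simp
  qed
  have D0: "D s 0 = 0" by (simp add: D_def)
  have nt: "norm (complex_of_real (real (thue_morse n)) / D s N) \<le> norm (1 / D s N)" for n N
    using tm_le[of n] by (simp add: norm_divide divide_right_mono)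
  have sx: "summable x" unfolding x_def by (rule summ_bound[OF assms(3)]) (rule nt)
  have sy: "summable y" unfolding y_def by (rule summ_bound[OF assms(3)]) (rule nt)
  have sz: "summable z" unfolding z_def by (rule summ_bound[OF assms(3)]) simp
  have se: "summable e" unfolding e_def by (rule summ_bound[OF assms(3)]) (simp add: norm_divide norm_power)
  define A where "A = suminf x"
  define B where "B = suminf y"
  define Z where "Z = suminf z"
  define E where "E = suminf e"
  have xA: "x sums A" using sx A_def by (simp add: summable_sums)
  have yB: "y sums B" using sy B_def by (simp add: summable_sums)
  have zZ: "z sums Z" using sz Z_def by (simp add: summable_sums)
  have eE: "e sums E" using se E_def by (simp add: summable_sums)
  have p1: "x (2*m) + x (2*m+1) + y (2*m) + y (2*m+1) = z (2*m) + z (2*m+1) + (y m - x m) / w" for m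
    using pair_xy[where s=s and m=m] by (simp add: x_def y_def z_def w_def)
  have p2: "e (2*m) + e (2*m+1) = z (2*m) + z (2*m+1) - 2 * z m / w" for m
    using pair_e[where s=s and m=m] by (simp add: e_def z_def w_def)
  have g1: "(\<lambda>m. z (2*m) + z (2*m+1) + (y m - x m) / w) sums (A + B)"
    by (rule grouped[OF sums_add[OF xA yB]]) (rule ext, subst p1[symmetric], simp add: algebra_simps)
  have g2: "(\<lambda>m. z (2*m) + z (2*m+1) + (y m - x m) / w) sums (Z + (B - A) / w)"
    by (rule sums_add[OF grouped[OF zZ refl] sums_divide[OF sums_diff[OF yB xA]]])
  have eq1: "A + B = Z + (B - A) / w" using sums_unique2[OF g1 g2] .
  have g3: "(\<lambda>m. z (2*m) + z (2*m+1) - 2 * z m / w) sums E"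
    by (rule grouped[OF eE]) (rule ext, rule p2)
  have g4: "(\<lambda>m. z (2*m) + z (2*m+1) - 2 * z m / w) sums (Z - 2 * Z / w)"
    by (rule sums_diff[OF grouped[OF zZ refl] sums_divide[OF sums_mult[OF zZ]]])
  have eq2: "E = Z - 2 * Z / w" using sums_unique2[OF g3 g4] .
  have x0: "x 0 = 0" "y 0 = 0" "z 0 = 0" "e 0 = 0" by (simp_all add: x_def y_def z_def e_def D0)
  have "(\<lambda>n. x (Suc n) - of_real k * z (Suc n)) sums (A - of_real k * Z)"
    by (intro sums_diff sums_mult shift0) (use xA zZ x0 in auto)
  moreover have "(\<lambda>n. x (Suc n) - of_real k * z (Suc n)) = (\<lambda>n. complex_of_real (q n) / (of_nat (Suc n) powr s))"
    by (auto simp: x_def z_def q_def D_def diff_divide_distrib)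
  ultimately have QA: "Q = A - of_real k * Z" unfolding Q_def by (simp add: sums_iff)
  have "(\<lambda>n. y (Suc n) + of_real l * z (Suc n)) sums (B + of_real l * Z)"
    by (intro sums_add sums_mult shift0) (use yB zZ x0 in auto)
  moreover have "(\<lambda>n. y (Suc n) + of_real l * z (Suc n)) = (\<lambda>n. complex_of_real (r (Suc n)) / (of_nat (Suc n) powr s))"
    by (auto simp: y_def z_def r_def D_def add_divide_distrib)
  ultimately have RB: "R = B + of_real l * Z" unfolding R_def by (simp add: sums_iff)
  have "(\<lambda>n. z (Suc n)) sums Z" by (rule shift0) (use zZ x0 in auto)
  moreover have "(\<lambda>n. z (Suc n)) = (\<lambda>n. 1 / (of_nat (Suc n) powr s))" by (auto simp: z_def D_def)
  ultimately have ZZ: "zeta_series s = Z" unfolding zeta_series_def by (simp add: sums_iff)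
  have "(\<lambda>n. e (Suc n)) sums E" by (rule shift0) (use eE x0 in auto)
  moreover have "(\<lambda>n. e (Suc n)) = (\<lambda>n. (-1) ^ n / (of_nat (Suc n) powr s))" by (auto simp: e_def D_def)
  ultimately have EE: "eta_series s = E" unfolding eta_series_def by (simp add: sums_iff)
  have key: "(w + 1) * Q + (w - 1) * R = lam * Z"
  proof -
    have "(w + 1) * A + (w - 1) * B = w * Z" using eq1 wnz by (simp add: field_simps)
    then show ?thesis unfolding QA RB lam_def w_def[symmetric] by (simp add: algebra_simps)
  qed
  have wE: "w * E = (w - 2) * Z" using eq2 wnz by (simp add: field_simps)
  show ?thesis unfolding w_def[symmetric] ZZ EE
  proof (intro conjI impI)
    assume "lam = 0"
    then have "(w + 1) * Q = (1 - w) * R" using key by (simp add: algebra_simps)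
    then show "Q = (1 - w) / (1 + w) * R" using w1 by (simp add: field_simps add.commute)
  next
    assume "lam = w" then show "(w + 1) * Q + (w - 1) * R = w * Z" using key by simp
  next
    assume "lam = w - 2" then show "(w + 1) * Q + (w - 1) * R = w * E" using key wE by simp
  qed
qed

end
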